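(* Let $Q$ be a quantale, $M$ a shrinkable $Q$-module and $\mathcal{F},\mathcal{G}\in\operatorname{mF}(Q)$. For $a,b\in M$ and $n,m\in\mathbb{N}$ (with $n,m\ge1$), if $a\preceq^n_\mathcal{F}b$ and $a\preceq^m_\mathcal{G}b$, then $a\preceq^{n+m-1}_{\mathcal{F}\cap\mathcal{G}}b$.
   Context: A quantale is a poset $Q$ in which every nonempty subset has a join $\sum$ (binary join $a+b$; no bottom required), with top $1$ and a commutative associative multiplication with unit $1$ distributing over nonempty joins. A $Q$-module is a poset $M$ with all nonempty joins and an associative unital action $Q\times M\to M$ distributing over nonempty joins in each variable. A multiplicative filter (m-filter) is a subset $\mathcal{F}\subseteq Q$ containing $1$, upward closed and closed under multiplication; $\operatorname{mF}(Q)$ is the set of m-filters. For $x,x_i$ write $x\le^*\sum_{i\in I}x_i$ if $x\le\sum_{i\in I_0}x_i$ for some finite nonempty $I_0\subseteq I$. $M$ is shrinkable if whenever $x\le\sum_{i\in I}x_i$ in $M$ there is a family $(y_j)_{j\in J}$ with $x=\sum_jy_j$ and $y_j\le^*\sum_ix_i$ for all $j$. For $a,b\in M$, $a\preceq^1_\mathcal{F}b$ means there are families $(a_i)_{i\in I}$ in $M$ and $(s_i)_{i\in I}$ in $\mathcal{F}$ with $a\le\sum_ia_i$ and $s_ia_i\le b$ for all $i$; $a\preceq^n_\mathcal{F}b$ ($n\ge1$) means there exist $c_1,\dots,c_{n-1}\in M$ with $a\preceq^1_\mathcal{F}c_1\preceq^1_\mathcal{F}\cdots\preceq^1_\mathcal{F}c_{n-1}\preceq^1_\mathcal{F}b$.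 *)

theory Defs
  imports Main
begin

definition is_lub :: "'a::order set \<Rightarrow> 'a \<Rightarrow> bool" where
  "is_lub A x \<longleftrightarrow> (\<forall>y\<in>A. y \<le> x) \<and> (\<forall>z. (\<forall>y\<in>A. y \<le> z) \<longrightarrow> x \<le> z)"

definition ne_joins :: "'a::order itself \<Rightarrow> bool" where
  "ne_joins (_::'a itself) \<longleftrightarrow> (\<forall>A::'a set. A \<noteq> {} \<longrightarrow> (\<exists>x. is_lub A x))"

definition Join :: "'a::order set \<Rightarrow> 'a" where
  "Join A = (THE x. is_lub A x)"

text \<open>The quantale is the whole type 'q with its order, multiplication mul and unit one.\<close>
definition quantale :: "('q::order \<Rightarrow> 'q \<Rightarrow> 'q) \<Rightarrow> 'q \<Rightarrow> bool" where
  "quantale mul one \<longleftrightarrow>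
     ne_joins TYPE('q) \<and>
     (\<forall>x. x \<le> one) \<and>
     (\<forall>x y. mul x y = mul y x) \<and>
     (\<forall>x y z. mul (mul x y) z = mul x (mul y z)) \<and>
     (\<forall>x. mul one x = x) \<and>
     (\<forall>a A. A \<noteq> {} \<longrightarrow> mul a (Join A) = Join (mul a ` A))"

definition qmodule :: "('q::order \<Rightarrow> 'q \<Rightarrow> 'q) \<Rightarrow> 'q \<Rightarrow> ('q \<Rightarrow> 'm::order \<Rightarrow> 'm) \<Rightarrow> bool" where
  "qmodule mul one act \<longleftrightarrow>
     ne_joins TYPE('m) \<and>
     (\<forall>r s x. act (mul r s) x = act r (act s x)) \<and>
     (\<forall>x. act one x = x) \<and>
     (\<forall>r A. A \<noteq> {} \<longrightarrow> act r (Join A) = Join (act r ` A)) \<and>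
     (\<forall>R x. R \<noteq> {} \<longrightarrow> act (Join R) x = Join ((\<lambda>r. act r x) ` R))"

definition mfilter :: "('q::order \<Rightarrow> 'q \<Rightarrow> 'q) \<Rightarrow> 'q \<Rightarrow> 'q set \<Rightarrow> bool" where
  "mfilter mul one F \<longleftrightarrow>
     one \<in> F \<and> (\<forall>x y. x \<in> F \<longrightarrow> x \<le> y \<longrightarrow> y \<in> F) \<and> (\<forall>x\<in>F. \<forall>y\<in>F. mul x y \<in> F)"

text \<open>x \<le>* \<Sum> X : x is below the join of some finite nonempty subfamily.
  Families are represented by their (nonempty) sets of members.\<close>
definition le_star :: "'a::order \<Rightarrow> 'a set \<Rightarrow> bool" where
  "le_star x X \<longleftrightarrow> (\<exists>X0. X0 \<subseteq> X \<and> finite X0 \<and> X0 \<noteq> {} \<and> x \<le> Join X0)"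

definition shrinkable :: "'m::order itself \<Rightarrow> bool" where
  "shrinkable (_::'m itself) \<longleftrightarrow>
     (\<forall>(x::'m) X. X \<noteq> {} \<longrightarrow> x \<le> Join X \<longrightarrow>
        (\<exists>Y. Y \<noteq> {} \<and> x = Join Y \<and> (\<forall>y\<in>Y. le_star y X)))"

text \<open>A family (a_i, s_i)_{i\<in>I} (I nonempty, since only nonempty joins exist) is
  represented by the nonempty set S of pairs (a_i, s_i).\<close>
definition prec1 :: "('q::order \<Rightarrow> 'm::order \<Rightarrow> 'm) \<Rightarrow> 'q set \<Rightarrow> 'm \<Rightarrow> 'm \<Rightarrow> bool" where
  "prec1 act F a b \<longleftrightarrow>
     (\<exists>S::('m \<times> 'q) set. S \<noteq> {} \<and> snd ` S \<subseteq> F \<and> a \<le> Join (fst ` S) \<and>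
        (\<forall>(x, s)\<in>S. act s x \<le> b))"

fun precn :: "('q::order \<Rightarrow> 'm::order \<Rightarrow> 'm) \<Rightarrow> 'q set \<Rightarrow> nat \<Rightarrow> 'm \<Rightarrow> 'm \<Rightarrow> bool" where
  "precn act F 0 a b = False"
| "precn act F (Suc 0) a b = prec1 act F a b"
| "precn act F (Suc (Suc n)) a b = (\<exists>c. prec1 act F a c \<and> precn act F (Suc n) c b)"

end

theory Submission
  imports Defs
begin

lemma Join_is_lub:
  assumes "ne_joins TYPE('a::order)" "A \<noteq> {}"
  shows "is_lub (A::'a set) (Join A)"
proof -
  from assms obtain x where x: "is_lub A x" unfolding ne_joins_def by blast
  have u: "y = x" if "is_lub A y" for y
  proof (rule antisym)
    show "y \<le> x" using that x unfolding is_lub_def by blast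
    show "x \<le> y" using that x unfolding is_lub_def by blast
  qed
  show ?thesis unfolding Join_def using theI[of "is_lub A" x, OF x u] .
qed

lemma Join_upper:
  assumes "ne_joins TYPE('a::order)" "x \<in> A"
  shows "x \<le> Join (A::'a set)"
  using Join_is_lub[OF assms(1), of A] assms(2) unfolding is_lub_def by blast

lemma Join_least:
  assumes "ne_joins TYPE('a::order)" "A \<noteq> {}" "\<And>x. x \<in> A \<Longrightarrow> x \<le> z"
  shows "Join (A::'a set) \<le> z"
  using Join_is_lub[OF assms(1,2)] assms(3) unfolding is_lub_def by blast

lemma Join_eq_max:
  assumes "ne_joins TYPE('a::order)" "y \<in> A" "\<And>x. x \<in> A \<Longrightarrow> x \<le> y"
  shows "Join (A::'a set) = y"
proof (rule antisym)
  show "Join A \<le> y" using Join_least[OF assms(1), of A y] assms(2,3) by blast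
  show "y \<le> Join A" using Join_upper[OF assms(1,2)] .
qed

definition goodp :: "('q::order \<Rightarrow> 'm::order \<Rightarrow> 'm) \<Rightarrow> 'q set \<Rightarrow> 'm \<Rightarrow> 'm \<Rightarrow> bool" where
  "goodp act F b y \<longleftrightarrow> (\<exists>s\<in>F. act s y \<le> b)"

lemma prec1_alt:
  "prec1 act F a b \<longleftrightarrow> (\<exists>Y. Y \<noteq> {} \<and> a \<le> Join Y \<and> (\<forall>y\<in>Y. goodp act F b y))"
proof
  assume "prec1 act F a b"
  then obtain S where S: "S \<noteq> {}" "snd ` S \<subseteq> F" "a \<le> Join (fst ` S)" "\<forall>(x, s)\<in>S. act s x \<le> b"
    unfolding prec1_def by blast
  show "\<exists>Y. Y \<noteq> {} \<and> a \<le> Join Y \<and> (\<forall>y\<in>Y. goodp act F b y)"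
  proof (intro exI conjI ballI)
    show "fst ` S \<noteq> {}" using S by auto
    show "a \<le> Join (fst ` S)" using S by auto
    fix y assume "y \<in> fst ` S"
    then obtain s where "(y, s) \<in> S" by force
    then show "goodp act F b y" using S unfolding goodp_def by force
  qed
next
  assume "\<exists>Y. Y \<noteq> {} \<and> a \<le> Join Y \<and> (\<forall>y\<in>Y. goodp act F b y)"
  then obtain Y where Y: "Y \<noteq> {}" "a \<le> Join Y" "\<forall>y\<in>Y. \<exists>s\<in>F. act s y \<le> b"
    unfolding goodp_def by blast
  then obtain g where g: "\<forall>y\<in>Y. g y \<in> F \<and> act (g y) y \<le> b" by metis
  define S where "S = (\<lambda>y. (y, g y)) ` Y"
  have "fst ` S = Y" unfolding S_def by force
  then show "prec1 act F a b" unfolding prec1_def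
    by (intro exI[of _ S]) (use Y g in \<open>auto simp: S_def\<close>)
qed

lemma precn_Suc:
  "k \<ge> 1 \<Longrightarrow> precn act F (Suc k) a b \<longleftrightarrow> (\<exists>c. prec1 act F a c \<and> precn act F k c b)"
  by (cases k) auto

locale qset =
  fixes mul :: "'q::order \<Rightarrow> 'q \<Rightarrow> 'q" and one :: 'q
    and act :: "'q \<Rightarrow> 'm::order \<Rightarrow> 'm"
  assumes Q: "quantale mul one" and M: "qmodule mul one act" and S: "shrinkable TYPE('m)"
begin

lemma JQ: "ne_joins TYPE('q)" using Q unfolding quantale_def by (elim conjE) simp
lemma JM: "ne_joins TYPE('m)" using M unfolding qmodule_def by (elim conjE) simp

lemma act_Join_r: "A \<noteq> {} \<Longrightarrow> act r (Join A) = Join (act r ` A)"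
  using M unfolding qmodule_def by (elim conjE) simp
lemma act_Join_l: "R \<noteq> {} \<Longrightarrow> act (Join R) x = Join ((\<lambda>r. act r x) ` R)"
  using M unfolding qmodule_def by (elim conjE) simp
lemma act_one: "act one x = x" using M unfolding qmodule_def by (elim conjE) simp
lemma le_one: "x \<le> one" using Q unfolding quantale_def by (elim conjE) simp
lemma mul_comm: "mul x y = mul y x" using Q unfolding quantale_def by (elim conjE) simp
lemma mul_one_all: "\<forall>x. mul one x = x" using Q unfolding quantale_def by (elim conjE) assumption
lemma mul_one: "mul one x = x" using mul_one_all by blast
lemma mul_Join: "A \<noteq> {} \<Longrightarrow> mul a (Join A) = Join (mul a ` A)"
  using Q unfolding quantale_def by (elim conjE) simp

lemma act_mono_r: assumes "x \<le> y" shows "act r x \<le> act r y"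
proof -
  have "Join {x, y} = y" by (rule Join_eq_max[OF JM]) (use assms in auto)
  then have "act r y = Join (act r ` {x, y})" using act_Join_r[of "{x,y}" r] by simp
  then show ?thesis using Join_upper[OF JM, of "act r x" "act r ` {x, y}"] by simp
qed

lemma act_mono_l: assumes "r \<le> s" shows "act r x \<le> act s x"
proof -
  have "Join {r, s} = s" by (rule Join_eq_max[OF JQ]) (use assms in auto)
  then have "act s x = Join ((\<lambda>r. act r x) ` {r, s})" using act_Join_l[of "{r,s}" x] by simp
  then show ?thesis using Join_upper[OF JM, of "act r x" "(\<lambda>r. act r x) ` {r, s}"] by simp
qed

lemma mul_mono: assumes "x \<le> y" shows "mul a x \<le> mul a y"
proof -
  have "Join {x, y} = y" by (rule Join_eq_max[OF JQ]) (use assms in auto)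
  then have "mul a y = Join (mul a ` {x, y})" using mul_Join[of "{x,y}" a] by simp
  then show ?thesis using Join_upper[OF JQ, of "mul a x" "mul a ` {x, y}"] by simp
qed

lemma act_le: "act s x \<le> x"
  using act_mono_l[OF le_one, of s x] act_one by simp

lemma mul_le1: "mul s t \<le> s"
proof -
  have "mul s t \<le> mul s one" by (rule mul_mono[OF le_one])
  also have "mul s one = s" using mul_comm[of s one] mul_one[of s] by simp
  finally show ?thesis .
qed
lemma mul_le2: "mul s t \<le> t"
proof -
  have "mul s t = mul t s" by (rule mul_comm)
  then show ?thesis using mul_le1[of t s] by simp
qed


lemma goodp_down: "goodp act F b y \<Longrightarrow> z \<le> y \<Longrightarrow> goodp act F b z"
  unfolding goodp_def using act_mono_r order_trans by blast

lemma goodp_up: "goodp act F b y \<Longrightarrow> b \<le> b' \<Longrightarrow> goodp act F b' y"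
  unfolding goodp_def using order_trans by blast

lemma common_scalar:
  assumes F: "mfilter mul one F" and fin: "finite X0" "X0 \<noteq> {}"
    and sub: "X0 \<subseteq> {y. goodp act F b y}"
  shows "\<exists>s\<in>F. \<forall>x\<in>X0. act s x \<le> b"
  using fin sub
proof (induction X0 rule: finite_ne_induct)
  case (singleton x) then show ?case unfolding goodp_def by auto
next
  case (insert x X)
  then obtain s where s: "s \<in> F" "\<forall>x\<in>X. act s x \<le> b" by auto
  from insert obtain t where t: "t \<in> F" "act t x \<le> b" unfolding goodp_def by auto
  have "mul s t \<in> F" using F s t unfolding mfilter_def by blast
  moreover have "act (mul s t) x \<le> b" using act_mono_l[OF mul_le2, of s t x] t order_trans by blast
  moreover have "act (mul s t) y \<le> b" if "y \<in> X" for y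
    using act_mono_l[OF mul_le1, of s t y] s that order_trans by blast
  ultimately show ?case by blast
qed

lemma goodp_finite:
  assumes F: "mfilter mul one F" and fin: "finite X0" "X0 \<noteq> {}"
    and sub: "X0 \<subseteq> {y. goodp act F b y}" and le: "y \<le> Join X0"
  shows "goodp act F b y"
proof -
  obtain s where s: "s \<in> F" "\<forall>x\<in>X0. act s x \<le> b" using common_scalar[OF assms(1-4)] by blast
  have "act s (Join X0) = Join (act s ` X0)" using act_Join_r fin by blast
  also have "\<dots> \<le> b" using Join_least[OF JM, of "act s ` X0" b] s fin by blast
  finally show ?thesis using act_mono_r[OF le, of s] s unfolding goodp_def by (meson order_trans)
qed

lemma goodp_le_star:
  assumes F: "mfilter mul one F" and "le_star y X" and "X \<subseteq> {y. goodp act F b y}"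
  shows "goodp act F b y"
  using assms goodp_finite unfolding le_star_def by blast

lemma shrink: "X \<noteq> {} \<Longrightarrow> (x::'m) \<le> Join X \<Longrightarrow> \<exists>Y. Y \<noteq> {} \<and> x = Join Y \<and> (\<forall>y\<in>Y. le_star y X)"
  using S unfolding shrinkable_def by blast

lemma decomp:
  assumes F: "mfilter mul one F" and G: "mfilter mul one G"
    and p1: "prec1 act F a c" and p2: "prec1 act G a d"
  shows "\<exists>Y. Y \<noteq> {} \<and> a \<le> Join Y \<and> (\<forall>y\<in>Y. y \<le> a \<and> goodp act F c y \<and> goodp act G d y)"
proof -
  obtain X1 where X1: "X1 \<noteq> {}" "a \<le> Join X1" "\<forall>y\<in>X1. goodp act F c y"
    using p1 unfolding prec1_alt by blast
  obtain X2 where X2: "X2 \<noteq> {}" "a \<le> Join X2" "\<forall>y\<in>X2. goodp act G d y"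
    using p2 unfolding prec1_alt by blast
  obtain Y1 where Y1: "Y1 \<noteq> {}" "a = Join Y1" "\<forall>y\<in>Y1. le_star y X1"
    using shrink[OF X1(1,2)] by blast
  have Y1g: "goodp act F c y" if "y \<in> Y1" for y
    using goodp_le_star[OF F] Y1(3) X1(3) that by blast
  have Y1a: "y \<le> a" if "y \<in> Y1" for y using Join_upper[OF JM that] Y1(2) by simp
  have "\<forall>y\<in>Y1. \<exists>Z. Z \<noteq> {} \<and> y = Join Z \<and> (\<forall>z\<in>Z. le_star z X2)"
  proof
    fix y assume "y \<in> Y1"
    then have "y \<le> Join X2" using Y1a X2(2) order_trans by blast
    then show "\<exists>Z. Z \<noteq> {} \<and> y = Join Z \<and> (\<forall>z\<in>Z. le_star z X2)" by (rule shrink[OF X2(1)])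
  qed
  then obtain f where f: "\<forall>y\<in>Y1. f y \<noteq> {} \<and> y = Join (f y) \<and> (\<forall>z\<in>f y. le_star z X2)"
    by metis
  define Y where "Y = (\<Union>y\<in>Y1. f y)"
  have Yne: "Y \<noteq> {}" using Y1(1) f unfolding Y_def by auto
  have zy: "z \<le> y" if "y \<in> Y1" "z \<in> f y" for y z
    using Join_upper[OF JM that(2)] f that by metis
  have "a \<le> Join Y"
  proof -
    have "y \<le> Join Y" if "y \<in> Y1" for y
    proof -
      have "Join (f y) \<le> Join Y"
      proof (rule Join_least[OF JM])
        show "f y \<noteq> {}" using f that by blast
        fix z assume "z \<in> f y" then have "z \<in> Y" using that unfolding Y_def by blast
        then show "z \<le> Join Y" by (rule Join_upper[OF JM])
      qed
      then show ?thesis using f that by metis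
    qed
    then show ?thesis using Join_least[OF JM Y1(1)] Y1(2) by metis
  qed
  moreover have "\<forall>z\<in>Y. z \<le> a \<and> goodp act F c z \<and> goodp act G d z"
  proof
    fix z assume "z \<in> Y"
    then obtain y where y: "y \<in> Y1" "z \<in> f y" unfolding Y_def by blast
    have "z \<le> a" using zy[OF y] Y1a[OF y(1)] by (rule order_trans)
    moreover have "goodp act F c z" using goodp_down[OF Y1g[OF y(1)] zy[OF y]] .
    moreover have "goodp act G d z" using goodp_le_star[OF G] f y X2(3) by blast
    ultimately show "z \<le> a \<and> goodp act F c z \<and> goodp act G d z" by blast
  qed
  ultimately show ?thesis using Yne by blast
qed

lemma prec1_down: "a' \<le> a \<Longrightarrow> prec1 act F a b \<Longrightarrow> prec1 act F a' b"
proof -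
  assume a: "a' \<le> a" "prec1 act F a b"
  obtain Y where Y: "Y \<noteq> {}" "a \<le> Join Y" "\<forall>y\<in>Y. goodp act F b y"
    using a(2) unfolding prec1_alt by blast
  have "a' \<le> Join Y" using a(1) Y(2) by (rule order_trans)
  then show ?thesis unfolding prec1_alt using Y(1,3) by blast
qed

lemma prec1_up: assumes "b \<le> b'" "prec1 act F a b" shows "prec1 act F a b'"
proof -
  obtain Y where Y: "Y \<noteq> {}" "a \<le> Join Y" "\<forall>y\<in>Y. goodp act F b y"
    using assms(2) unfolding prec1_alt by blast
  have "\<forall>y\<in>Y. goodp act F b' y" using Y(3) goodp_up[OF _ assms(1)] by blast
  then show ?thesis unfolding prec1_alt using Y(1,2) by blast
qed

lemma prec1_refl: assumes "one \<in> F" "a \<le> b" shows "prec1 act F a b"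
proof -
  have "a \<le> Join {a}" by (rule Join_upper[OF JM]) simp
  moreover have "goodp act F b a" unfolding goodp_def using assms act_one[of a] by metis
  ultimately show ?thesis unfolding prec1_alt by blast
qed

lemma prec1_Join:
  assumes "X \<noteq> {}" "\<forall>x\<in>X. prec1 act F x b"
  shows "prec1 act F (Join X) b"
proof -
  have "\<forall>x\<in>X. \<exists>Y. Y \<noteq> {} \<and> x \<le> Join Y \<and> (\<forall>y\<in>Y. goodp act F b y)"
    using assms(2) unfolding prec1_alt by blast
  then obtain f where f: "\<forall>x\<in>X. f x \<noteq> {} \<and> x \<le> Join (f x) \<and> (\<forall>y\<in>f x. goodp act F b y)"
    by metis
  define Y where "Y = (\<Union>x\<in>X. f x)"
  have "Y \<noteq> {}" using assms(1) f unfolding Y_def by auto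
  moreover have "Join X \<le> Join Y"
  proof (rule Join_least[OF JM assms(1)])
    fix x assume x: "x \<in> X"
    have "Join (f x) \<le> Join Y"
    proof (rule Join_least[OF JM])
      show "f x \<noteq> {}" using f x by blast
      fix z assume "z \<in> f x" then have "z \<in> Y" using x unfolding Y_def by blast
      then show "z \<le> Join Y" by (rule Join_upper[OF JM])
    qed
    then show "x \<le> Join Y" using f x order_trans by blast
  qed
  moreover have "\<forall>y\<in>Y. goodp act F b y" using f unfolding Y_def by blast
  ultimately show ?thesis unfolding prec1_alt by blast
qed

lemma precn_down: "a' \<le> a \<Longrightarrow> precn act F k a b \<Longrightarrow> precn act F k a' b"
proof -
  assume a: "a' \<le> a" "precn act F k a b"
  show ?thesis
  proof (cases k)
    case 0 then show ?thesis using a by simp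
  next
    case (Suc j)
    show ?thesis
    proof (cases j)
      case 0 then show ?thesis using a Suc prec1_down[OF a(1)] by simp
    next
      case (Suc i)
      then obtain c where "prec1 act F a c" "precn act F (Suc i) c b" using a \<open>k = Suc j\<close> by auto
      then have "prec1 act F a' c" using prec1_down[OF a(1)] by blast
      then show ?thesis using \<open>precn act F (Suc i) c b\<close> Suc \<open>k = Suc j\<close> by auto
    qed
  qed
qed

lemma precn_refl: assumes "one \<in> F" "a \<le> b" "k \<ge> 1" shows "precn act F k a b"
  using assms(3,2)
proof (induction k arbitrary: a rule: nat_induct_at_least)
  case base then show ?case using prec1_refl[OF assms(1)] by simp
next
  case (Suc n)
  have "prec1 act F a a" using prec1_refl[OF assms(1)] by simp
  then show ?case using precn_Suc[of n act F a b] Suc by auto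
qed

lemma precn_Join:
  "k \<ge> 1 \<Longrightarrow> X \<noteq> {} \<Longrightarrow> \<forall>x\<in>X. precn act F k x b \<Longrightarrow> precn act F k (Join X) b"
proof (induction k arbitrary: X rule: nat_induct_at_least)
  case base then show ?case using prec1_Join by simp
next
  case (Suc n)
  have "\<forall>x\<in>X. \<exists>c. prec1 act F x c \<and> precn act F n c b"
    using Suc precn_Suc[of n act F] by blast
  then obtain g where g: "\<forall>x\<in>X. prec1 act F x (g x) \<and> precn act F n (g x) b" by metis
  have c: "precn act F n (Join (g ` X)) b" using Suc g by auto
  have "prec1 act F x (Join (g ` X))" if "x \<in> X" for x
  proof -
    have gx: "g x \<in> g ` X" using that by blast
    have "prec1 act F x (g x)" using g that by blast
    then show ?thesis by (rule prec1_up[OF Join_upper[OF JM gx]])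
  qed
  then have "prec1 act F (Join X) (Join (g ` X))" by (intro prec1_Join[OF Suc.prems(1)] ballI)
  then show ?case using c precn_Suc[of n act F] Suc by blast
qed

lemma precn_first:
  assumes "precn act F n a b" "n \<ge> 1"
  shows "\<exists>c. prec1 act F a c \<and> ((n = 1 \<and> c = b) \<or> (n \<ge> 2 \<and> precn act F (n - 1) c b))"
proof (cases n)
  case 0 then show ?thesis using assms by simp
next
  case (Suc j)
  then show ?thesis using assms by (cases j) auto
qed


lemma join_scalar:
  assumes F: "mfilter mul one F" and G: "mfilter mul one G"
    and s: "s \<in> F" "act s y \<le> e" and t: "t \<in> G" "act t y \<le> e"
  shows "goodp act (F \<inter> G) e y"
proof -
  define u where "u = Join {s, t}"
  have "s \<le> u" "t \<le> u" unfolding u_def using Join_upper[OF JQ] by auto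
  then have "u \<in> F \<inter> G" using F G s t unfolding mfilter_def by blast
  moreover have "act u y = Join ((\<lambda>r. act r y) ` {s, t})" unfolding u_def by (rule act_Join_l) simp
  moreover have "Join ((\<lambda>r. act r y) ` {s, t}) \<le> e"
    by (rule Join_least[OF JM]) (use s t in auto)
  ultimately show ?thesis unfolding goodp_def by metis
qed

lemma main:
  assumes F: "mfilter mul one F" and G: "mfilter mul one G"
  shows "precn act F n a b \<Longrightarrow> precn act G m a b \<Longrightarrow> n \<ge> 1 \<Longrightarrow> m \<ge> 1
    \<Longrightarrow> precn act (F \<inter> G) (n + m - 1) a b"
proof (induction "n + m" arbitrary: n m a b rule: less_induct)
  case less
  have oneH: "one \<in> F \<inter> G" using F G unfolding mfilter_def by blast
  obtain c where c: "prec1 act F a c" "(n = 1 \<and> c = b) \<or> (n \<ge> 2 \<and> precn act F (n - 1) c b)"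
    using precn_first[OF less.prems(1,3)] by blast
  obtain d where d: "prec1 act G a d" "(m = 1 \<and> d = b) \<or> (m \<ge> 2 \<and> precn act G (m - 1) d b)"
    using precn_first[OF less.prems(2,4)] by blast
  obtain Y where Y: "Y \<noteq> {}" "a \<le> Join Y" "\<forall>y\<in>Y. y \<le> a \<and> goodp act F c y \<and> goodp act G d y"
    using decomp[OF F G c(1) d(1)] by blast
  obtain sf where sf: "\<forall>y\<in>Y. sf y \<in> F \<and> act (sf y) y \<le> c" using Y(3) unfolding goodp_def by metis
  obtain tg where tg: "\<forall>y\<in>Y. tg y \<in> G \<and> act (tg y) y \<le> d" using Y(3) unfolding goodp_def by metis
  have step: "prec1 act (F \<inter> G) a e"
    if "\<forall>y\<in>Y. act (sf y) y \<le> e \<and> act (tg y) y \<le> e" for e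
  proof -
    have "\<forall>y\<in>Y. goodp act (F \<inter> G) e y"
    proof
      fix y assume y: "y \<in> Y"
      show "goodp act (F \<inter> G) e y"
        by (rule join_scalar[OF F G, of "sf y" y e "tg y"]) (use sf tg that y in blast)+
    qed
    then show ?thesis unfolding prec1_alt using Y(1,2) by blast
  qed
  show ?case
  proof (cases "n = 1 \<and> m = 1")
    case True
    then have "c = b" "d = b" using c d by auto
    then show ?thesis using step sf tg True by simp
  next
    case False
    define k where "k = n + m - 2"
    have k1: "k \<ge> 1" using False less.prems(3,4) unfolding k_def by linarith
    define P where "P = (\<lambda>y. act (sf y) y) ` Y \<union> (\<lambda>y. act (tg y) y) ` Y"
    have Pne: "P \<noteq> {}" using Y(1) unfolding P_def by blast
    have Pc: "precn act (F \<inter> G) k p b" if "p \<in> P" for p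
    proof -
      from that consider (f) y where "y \<in> Y" "p = act (sf y) y" | (g) y where "y \<in> Y" "p = act (tg y) y"
        unfolding P_def by blast
      then show ?thesis
      proof cases
        case f
        have pa: "p \<le> a" using f Y(3) act_le order_trans by metis
        have pc: "p \<le> c" using f sf by simp
        show ?thesis
        proof (cases "n = 1")
          case True then show ?thesis using c pc precn_refl[OF oneH _ k1] by simp
        next
          case False
          then have "n \<ge> 2" using less.prems(3) by simp
          then have "precn act F (n - 1) p b" using c precn_down[OF pc] by auto
          moreover have "precn act G m p b" using precn_down[OF pa less.prems(2)] .
          ultimately have "precn act (F \<inter> G) (n - 1 + m - 1) p b"
            using less.hyps[of "n - 1" m] \<open>n \<ge> 2\<close> less.prems(4) by simp
          moreover have "n - 1 + m - 1 = k" unfolding k_def using \<open>n \<ge> 2\<close> by simp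
          ultimately show ?thesis by simp
        qed
      next
        case g
        have pa: "p \<le> a" using g Y(3) act_le order_trans by metis
        have pd: "p \<le> d" using g tg by simp
        show ?thesis
        proof (cases "m = 1")
          case True then show ?thesis using d pd precn_refl[OF oneH _ k1] by simp
        next
          case False
          then have "m \<ge> 2" using less.prems(4) by simp
          then have "precn act G (m - 1) p b" using d precn_down[OF pd] by auto
          moreover have "precn act F n p b" using precn_down[OF pa less.prems(1)] .
          ultimately have "precn act (F \<inter> G) (n + (m - 1) - 1) p b"
            using less.hyps[of n "m - 1"] \<open>m \<ge> 2\<close> less.prems(3) by simp
          moreover have "n + (m - 1) - 1 = k" unfolding k_def using \<open>m \<ge> 2\<close> by simp
          ultimately show ?thesis by simp
        qed
      qed
    qed
    have eb: "precn act (F \<inter> G) k (Join P) b" using precn_Join[OF k1 Pne] Pc by blast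
    have ae: "prec1 act (F \<inter> G) a (Join P)"
      by (rule step) (use Join_upper[OF JM] in \<open>auto simp: P_def\<close>)
    have "n + m - 1 = Suc k" using k1 unfolding k_def by simp
    moreover have "precn act (F \<inter> G) (Suc k) a b"
      using precn_Suc[OF k1, of act "F \<inter> G" a b] eb ae by blast
    ultimately show ?thesis by simp
  qed
qed

end

theorem mainTheorem4:
  fixes mul :: "'q::order \<Rightarrow> 'q \<Rightarrow> 'q" and one :: 'q
    and act :: "'q \<Rightarrow> 'm::order \<Rightarrow> 'm"
    and F G :: "'q set" and a b :: 'm and n m :: nat
  assumes "quantale mul one"
    and "qmodule mul one act"
    and "shrinkable TYPE('m)"
    and "mfilter mul one F" and "mfilter mul one G"
    and "n \<ge> 1" and "m \<ge> 1"
    and "precn act F n a b" and "precn act G m a b"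
  shows "precn act (F \<inter> G) (n + m - 1) a b"
proof -
  interpret qset mul one act using assms(1-3) by unfold_locales
  show ?thesis using main[OF assms(4,5) assms(8,9,6,7)] .
qed

end
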